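(* Let $n\ge1$, $m>0$, $\alpha\in\mathbf R$, $\beta,\gamma>0$, $1\le p,q<\infty$, and suppose $c:=\frac{4\gamma}{\beta^2q}\left(\beta-\frac{\alpha}{p}\right)>1$. Then the formula $P_{\beta m}f(x)=\int_{\mathbf C^n}f(y)K_{\beta m}(x,y)\,d\mu_{\beta m}(y)$ defines (the integral converging for every $f\in L^p_{\alpha m}$) a bounded operator from $L^p_{\alpha m}$ into $L^q_{\gamma m}$.
   Context: For $\alpha\in\mathbf R$, $m>0$, $d\mu_{\alpha m}(z)=e^{-\alpha|z|^{2m}}dz$ on $\mathbf C^n$ and $L^p_{\alpha m}=L^p(\mathbf C^n,d\mu_{\alpha m})$. $K_{\beta m}(x,y)=\frac{m\beta^{n/m}}{\pi^n}\sum_{k\ge0}\frac{(\beta^{1/m}\langle x,y\rangle)^k}{k!}\frac{\Gamma(n+k)}{\Gamma(\frac{n+k}{m})}$ is the reproducing kernel of the space of entire functions in $L^2_{\beta m}$. *)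

theory Defs
  imports "HOL-Analysis.Analysis"
begin

text \<open>Points of C^n are modelled as complex^'n for a finite index type 'n,
  so n = CARD('n) >= 1. The measure dz is Lebesgue measure on C^n = R^(2n).\<close>

definition cinner :: "complex^'n \<Rightarrow> complex^'n \<Rightarrow> complex" where
  "cinner x y = (\<Sum>j\<in>UNIV. x $ j * cnj (y $ j))"

text \<open>Weight e^{-alpha |z|^{2m}} of d mu_{alpha m}.\<close>
definition wgt :: "real \<Rightarrow> real \<Rightarrow> complex^'n \<Rightarrow> real" where
  "wgt \<alpha> m z = exp (- \<alpha> * norm z powr (2 * m))"

definition Kern :: "real \<Rightarrow> real \<Rightarrow> complex^'n \<Rightarrow> complex^'n \<Rightarrow> complex" where
  "Kern \<beta> m x y =
     complex_of_real (m * \<beta> powr (real CARD('n) / m) / pi ^ CARD('n)) *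
     (\<Sum>k. (complex_of_real (\<beta> powr (1 / m)) * cinner x y) ^ k / of_nat (fact k) *
           complex_of_real (Gamma (real (CARD('n) + k)) / Gamma (real (CARD('n) + k) / m)))"

definition Lpw :: "real \<Rightarrow> real \<Rightarrow> real \<Rightarrow> (complex^'n \<Rightarrow> complex) set" where
  "Lpw \<alpha> m p = {f. f \<in> borel_measurable lebesgue \<and>
      integrable lebesgue (\<lambda>z. norm (f z) powr p * wgt \<alpha> m z)}"

definition Lpw_norm :: "real \<Rightarrow> real \<Rightarrow> real \<Rightarrow> (complex^'n \<Rightarrow> complex) \<Rightarrow> real" where
  "Lpw_norm \<alpha> m p f = (\<integral>z. norm (f z) powr p * wgt \<alpha> m z \<partial>lebesgue) powr (1 / p)"

definition Pint :: "real \<Rightarrow> real \<Rightarrow> (complex^'n \<Rightarrow> complex) \<Rightarrow> complex^'n \<Rightarrow> complex^'n \<Rightarrow> complex" where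
  "Pint \<beta> m f x y = f y * Kern \<beta> m x y * complex_of_real (wgt \<beta> m y)"

definition Pop :: "real \<Rightarrow> real \<Rightarrow> (complex^'n \<Rightarrow> complex) \<Rightarrow> complex^'n \<Rightarrow> complex" where
  "Pop \<beta> m f x = (\<integral>y. Pint \<beta> m f x y \<partial>lebesgue)"

end

theory Submission
  imports Defs
begin


lemma pow_le_exp:
  fixes x :: real assumes "0 \<le> x"
  shows "x ^ k / fact k \<le> exp x"
proof -
  have "(\<Sum>n\<in>{k}. x ^ n / fact n) \<le> (\<Sum>n. x ^ n / fact n)"
    using assms summable_exp_generic[of x]
    by (intro sum_le_suminf) (auto simp: divide_inverse ac_simps)
  thus ?thesis by (simp add: exp_def divide_inverse ac_simps)
qed

lemma powr_le_exp:
  fixes s \<epsilon> :: real assumes "0 \<le> s" "0 < \<epsilon>"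
  shows "\<exists>C>0. \<forall>u\<ge>0. u powr s \<le> C * exp (\<epsilon> * u)"
proof -
  define J where "J = nat \<lceil>s\<rceil>"
  have sJ: "s \<le> real J" unfolding J_def by linarith
  define C where "C = 1 + fact J / \<epsilon> ^ J"
  have "C > 0" unfolding C_def using assms by (simp add: add_pos_nonneg)
  moreover have "u powr s \<le> C * exp (\<epsilon> * u)" if u: "u \<ge> 0" for u
  proof -
    have "u powr s \<le> 1 + u ^ J"
    proof (cases "u \<le> 1")
      case True
      hence "u powr s \<le> 1" using u assms by (intro powr_le1) auto
      thus ?thesis using u by (smt (verit) zero_le_power)
    next
      case False
      hence "u powr s \<le> u powr real J" using sJ by (intro powr_mono) auto
      also have "\<dots> = u ^ J" using False by (simp add: powr_realpow)
      finally show ?thesis by simp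
    qed
    also have "u ^ J = fact J / \<epsilon> ^ J * ((\<epsilon> * u) ^ J / fact J)"
      using assms by (simp add: power_mult_distrib field_simps)
    also have "\<dots> \<le> fact J / \<epsilon> ^ J * exp (\<epsilon> * u)"
      using pow_le_exp[of "\<epsilon> * u" J] u assms by (intro mult_left_mono) auto
    finally have "u powr s \<le> 1 + fact J / \<epsilon> ^ J * exp (\<epsilon> * u)" by simp
    also have "\<dots> \<le> C * exp (\<epsilon> * u)"
      using u assms unfolding C_def by (simp add: distrib_right)
    finally show ?thesis .
  qed
  ultimately show ?thesis by blast
qed




lemma Gamma_lower:
  fixes z a :: real assumes z: "z > 0" and a: "a \<ge> 1"
  shows "a powr (z-1) * exp (-a-1) / 2 \<le> Gamma z"
proof -
  let ?f = "\<lambda>t. t powr (z - 1) / exp t"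
  have I: "(?f has_integral Gamma z) {0..}" by (rule Gamma_integral_real[OF z])
  have int1: "?f integrable_on {a..a+1}"
    using a by (intro integrable_continuous_interval continuous_intros) auto
  have pw: "a powr (z-1) * exp (-a-1) / 2 \<le> ?f t" if t: "t \<in> {a..a+1}" for t
  proof -
    have tp: "t > 0" using t a by auto
    have A: "a powr (z-1) / 2 \<le> t powr (z-1)"
    proof (cases "z \<ge> 1")
      case True
      have "a powr (z-1) \<le> t powr (z-1)" using True t a by (intro powr_mono2) auto
      moreover have "a powr (z-1) \<ge> 0" by simp
      ultimately show ?thesis by linarith
    next
      case False
      have "(2*a) powr (z-1) \<le> t powr (z-1)"
        using False t a by (intro powr_mono2') auto
      moreover have "(2*a) powr (z-1) = 2 powr (z-1) * a powr (z-1)"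
        using a by (simp add: powr_mult)
      moreover have "2 powr (-1) \<le> 2 powr (z-1)" using z by (intro powr_mono) auto
      moreover have "2 powr (-1::real) = 1/2" by (simp add: powr_minus)
      moreover have "a powr (z-1) \<ge> 0" by simp
      ultimately have "1/2 * a powr (z-1) \<le> 2 powr (z-1) * a powr (z-1)"
        by (intro mult_right_mono) auto
      with \<open>(2*a) powr (z-1) \<le> t powr (z-1)\<close> \<open>(2*a) powr (z-1) = 2 powr (z-1) * a powr (z-1)\<close>
      show ?thesis by linarith
    qed
    have B: "exp (-a-1) \<le> 1 / exp t"
    proof -
      have "exp (-a-1) \<le> exp (-t)" using t by simp
      thus ?thesis by (simp add: exp_minus field_simps)
    qed
    have "a powr (z-1) * exp (-a-1) / 2 = (a powr (z-1) / 2) * exp (-a-1)" by simp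
    also have "\<dots> \<le> t powr (z-1) * (1 / exp t)"
      using A B by (intro mult_mono) auto
    finally show ?thesis by simp
  qed
  have "a powr (z-1) * exp (-a-1) / 2 = integral {a..a+1} (\<lambda>t. a powr (z-1) * exp (-a-1) / 2)"
    by simp
  also have "\<dots> \<le> integral {a..a+1} ?f"
    using pw int1 by (intro integral_le) auto
  also have "\<dots> \<le> integral {0..} ?f"
    using a I int1 by (intro integral_subset_le) (auto simp: has_integral_integrable)
  also have "\<dots> = Gamma z" using I by (simp add: integral_unique)
  finally show ?thesis .
qed

lemma cinner_bound: "norm (cinner x y) \<le> norm x * norm (y :: complex^'n)"
proof -
  define X :: "real^'n" where "X = (\<chi> j. norm (x $ j))"
  define Y :: "real^'n" where "Y = (\<chi> j. norm (y $ j))"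
  have "norm (cinner x y) \<le> (\<Sum>j\<in>UNIV. norm (x $ j * cnj (y $ j)))"
    unfolding cinner_def by (rule norm_sum)
  also have "\<dots> = inner X Y" unfolding X_def Y_def inner_vec_def by (simp add: norm_mult)
  also have "\<dots> \<le> norm X * norm Y" by (rule norm_cauchy_schwarz)
  also have "norm X = norm x" unfolding X_def norm_vec_def by simp
  also have "norm Y = norm y" unfolding Y_def norm_vec_def by simp
  finally show ?thesis .
qed




lemma term_bound:
  fixes N k :: nat and m lam t a :: real
  assumes N: "N \<ge> 1" and m: "m > 0" and lam: "lam > 1" and t: "t \<ge> 0"
    and a_def: "a = lam * t powr m + 1"
  shows "t^k * (Gamma (real (N+k)) / Gamma (real (N+k) / m)) / fact k
     \<le> 2 * exp (a+1) * a * (Gamma (real (N+k)) / fact k * (lam powr (-1/m))^k)"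
proof -
  define z where "z = real (N+k) / m"
  have a1: "a \<ge> 1" using a_def lam t by simp
  have apos: "a > 0" using a1 by simp
  have zpos: "z > 0" using N m unfolding z_def by simp
  have Gz: "Gamma z > 0" using zpos by simp
  have Gn: "Gamma (real (N+k)) > 0" using N by simp
  have low: "a powr (z-1) * exp (-a-1) / 2 \<le> Gamma z" by (rule Gamma_lower[OF zpos a1])
  define P where "P = a powr (z-1)"
  define Q where "Q = exp (-a-1)"
  have Ppos: "P > 0" unfolding P_def using apos by simp
  have Qpos: "Q > 0" unfolding Q_def by simp
  have e1: "a powr (1-z) * P = 1" unfolding P_def using apos by (simp add: powr_add[symmetric])
  have e2: "exp (a+1) * Q = 1" unfolding Q_def by (simp add: exp_add[symmetric])
  have inv: "1 / Gamma z \<le> 2 * exp (a+1) * a powr (1 - z)"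
  proof -
    have "1 / Gamma z \<le> 1 / (P * Q / 2)"
      using low Ppos Qpos Gz unfolding P_def[symmetric] Q_def[symmetric]
      by (intro divide_left_mono) auto
    also have "\<dots> = 2 * exp (a+1) * a powr (1 - z)"
    proof -
      have "a powr (1-z) = 1 / P" using e1 Ppos by (simp add: field_simps)
      moreover have "exp (a+1) = 1 / Q" using e2 Qpos by (simp add: field_simps)
      ultimately show ?thesis by simp
    qed
    finally show ?thesis .
  qed
  have split: "a powr (1-z) = a powr (1 - real N / m) * a powr (-(real k / m))"
  proof -
    have "1 - z = (1 - real N / m) + (-(real k / m))" unfolding z_def by (simp add: add_divide_distrib)
    hence "a powr (1 - z) = a powr ((1 - real N / m) + (-(real k / m)))" by (rule arg_cong)
    thus ?thesis by (simp only: powr_add)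
  qed
  have A1: "a powr (1 - real N / m) \<le> a"
  proof -
    have "a powr (1 - real N / m) \<le> a powr 1" using a1 N m by (intro powr_mono) auto
    thus ?thesis using apos by simp
  qed
  define \<rho> where "\<rho> = lam powr (-1/m)"
  have rho_pos: "\<rho> > 0" unfolding \<rho>_def using lam by simp
  have A2: "t^k * a powr (-(real k / m)) \<le> \<rho>^k"
  proof (cases "k = 0")
    case True thus ?thesis using apos by simp
  next
    case k: False
    show ?thesis
    proof (cases "t = 0")
      case True thus ?thesis using k rho_pos by (simp add: zero_power)
    next
      case False
      hence tp: "t > 0" using t by simp
      have "t^k = (t powr m) powr (real k / m)"
        using tp m by (simp add: powr_powr powr_realpow)
      hence "t^k * a powr (-(real k / m)) = (t powr m) powr (real k / m) / a powr (real k / m)"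
        using apos by (simp add: powr_minus divide_inverse)
      also have "\<dots> = (t powr m / a) powr (real k / m)"
        using apos tp by (simp add: powr_divide)
      also have "\<dots> \<le> (1 / lam) powr (real k / m)"
      proof (intro powr_mono2)
        show "t powr m / a \<le> 1 / lam"
          using lam apos a_def by (simp add: field_simps)
      qed (use m apos in auto)
      also have "\<dots> = \<rho>^k"
      proof -
        have "(1 / lam) powr (real k / m) = 1 / lam powr (real k / m)"
          using lam by (simp add: powr_divide)
        also have "\<dots> = lam powr (-(real k / m))" by (simp add: powr_minus divide_inverse)
        also have "-(real k / m) = -1/m * real k" by simp
        finally have "(1 / lam) powr (real k / m) = lam powr (-1/m * real k)" .
        also have "\<dots> = \<rho> powr real k" unfolding \<rho>_def using lam by (simp add: powr_powr)
        also have "\<dots> = \<rho>^k" using rho_pos by (simp add: powr_realpow)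
        finally show ?thesis .
      qed
      finally show ?thesis .
    qed
  qed
  have key: "t^k * a powr (1-z) \<le> a * \<rho>^k"
  proof -
    have "t^k * a powr (1-z) = a powr (1 - real N / m) * (t^k * a powr (-(real k / m)))"
      using split by simp
    also have "\<dots> \<le> a * \<rho>^k"
      using A1 A2 t apos by (intro mult_mono) auto
    finally show ?thesis .
  qed
  have "t^k * (Gamma (real (N+k)) / Gamma (real (N+k) / m)) / fact k
        = (Gamma (real (N+k)) / fact k) * (t^k * (1 / Gamma z))"
    unfolding z_def by (simp add: ac_simps)
  also have "\<dots> \<le> (Gamma (real (N+k)) / fact k) * (t^k * (2 * exp (a+1) * a powr (1 - z)))"
    using inv Gn t by (intro mult_left_mono) auto
  also have "\<dots> = (Gamma (real (N+k)) / fact k) * (2 * exp (a+1)) * (t^k * a powr (1 - z))"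
    by simp
  also have "\<dots> \<le> (Gamma (real (N+k)) / fact k) * (2 * exp (a+1)) * (a * \<rho>^k)"
    using key Gn by (intro mult_left_mono) auto
  also have "\<dots> = 2 * exp (a+1) * a * (Gamma (real (N+k)) / fact k * (lam powr (-1/m))^k)"
    unfolding \<rho>_def by simp
  finally show ?thesis .
qed

lemma coef_summable:
  fixes N :: nat and \<rho> :: real
  assumes N: "N \<ge> 1" and r0: "0 \<le> \<rho>" and r1: "\<rho> < 1"
  shows "summable (\<lambda>k. Gamma (real (N+k)) / fact k * \<rho>^k)"
proof -
  define c where "c = (1 + \<rho>) / 2"
  define K where "K = nat \<lceil>real N / (c - \<rho>)\<rceil>"
  have cr: "c - \<rho> > 0" using r1 unfolding c_def by simp
  show ?thesis
  proof (rule summable_ratio_test[where c=c and N=K])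
  show "c < 1" using r1 unfolding c_def by simp
    fix n assume nK: "n \<ge> K"
    have Gn: "Gamma (real (N+n)) > 0" using N by simp
    have G1: "Gamma (1 + (real N + real n)) = (real N + real n) * Gamma (real N + real n)"
    proof -
      have np: "real N + real n \<notin> \<int>\<^sub>\<le>\<^sub>0" using N by (auto elim!: nonpos_Ints_cases)
      thus ?thesis using Gamma_plus1[of "real (N+n)"] by (simp add: add.commute)
    qed
    have "real N / (c - \<rho>) \<le> real n" using nK unfolding K_def by linarith
    hence "real N \<le> real n * (c - \<rho>)" using cr by (simp add: field_simps)
    moreover have "\<rho> * real N \<le> real N" using r0 r1 by (intro mult_left_le_one_le) auto
    ultimately have ineq: "real (N+n) * \<rho> \<le> c * real (Suc n)"
      using r0 r1 unfolding c_def by (simp add: field_simps)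
    have "norm (Gamma (real (N + Suc n)) / fact (Suc n) * \<rho> ^ Suc n)
        = (real (N+n) * \<rho>) / real (Suc n) * (Gamma (real (N+n)) / fact n * \<rho>^n)"
      using Gn r0 by (simp add: G1 abs_mult field_simps)
    also have "\<dots> \<le> c * (Gamma (real (N+n)) / fact n * \<rho>^n)"
    proof (rule mult_right_mono)
      show "real (N + n) * \<rho> / real (Suc n) \<le> c" using ineq by (simp add: field_simps)
    qed (use Gn r0 in simp)
    also have "\<dots> = c * norm (Gamma (real (N + n)) / fact n * \<rho> ^ n)"
      using Gn r0 by simp
    finally show "norm (Gamma (real (N + Suc n)) / fact (Suc n) * \<rho> ^ Suc n)
      \<le> c * norm (Gamma (real (N + n)) / fact n * \<rho> ^ n)" .
  qed
qed




definition KC :: "nat \<Rightarrow> real \<Rightarrow> real \<Rightarrow> nat \<Rightarrow> complex" where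
  "KC N \<beta> m k = complex_of_real (\<beta> powr (1/m)) ^ k / of_nat (fact k) *
      complex_of_real (Gamma (real (N + k)) / Gamma (real (N + k) / m))"

lemma KC_norm:
  assumes "N \<ge> 1" "m > 0" "\<beta> > 0"
  shows "norm (KC N \<beta> m k * w ^ k) = (\<beta> powr (1/m) * norm w)^k * (Gamma (real (N+k)) / Gamma (real (N+k) / m)) / fact k"
proof -
  have "Gamma (real (N+k)) > 0" "Gamma (real (N+k) / m) > 0" using assms by auto
  thus ?thesis using assms
    by (simp add: KC_def norm_mult norm_divide norm_power power_mult_distrib abs_of_pos ac_simps)
qed

lemma series_bound:
  fixes w :: complex and N :: nat and m \<beta> lam t :: real
  assumes N: "N \<ge> 1" and m: "m > 0" and \<beta>: "\<beta> > 0" and lam: "lam > 1"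
    and t: "\<beta> powr (1/m) * norm w \<le> t"
  defines "a \<equiv> lam * t powr m + 1"
  defines "T \<equiv> (\<Sum>k. Gamma (real (N+k)) / fact k * (lam powr (-1/m))^k)"
  shows "summable (\<lambda>k. norm (KC N \<beta> m k * w ^ k))"
    and "norm (\<Sum>k. KC N \<beta> m k * w ^ k) \<le> 2 * exp (a+1) * a * T"
proof -
  define t0 where "t0 = \<beta> powr (1/m) * norm w"
  have t0: "0 \<le> t0" unfolding t0_def using \<beta> by simp
  have tt: "0 \<le> t" using t0 t unfolding t0_def by linarith
  have rho: "0 \<le> lam powr (-1/m)" "lam powr (-1/m) < 1"
    using lam m by (auto intro!: powr_less_one simp del: powr_minus_divide)
  have sc: "summable (\<lambda>k. Gamma (real (N+k)) / fact k * (lam powr (-1/m))^k)"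
    by (rule coef_summable[OF N rho])
  have sc2: "summable (\<lambda>k. 2 * exp (a+1) * a * (Gamma (real (N+k)) / fact k * (lam powr (-1/m))^k))"
    by (intro summable_mult sc)
  have bnd: "norm (KC N \<beta> m k * w ^ k) \<le> 2 * exp (a+1) * a * (Gamma (real (N+k)) / fact k * (lam powr (-1/m))^k)" for k
  proof -
    have Gp: "Gamma (real (N+k)) / Gamma (real (N+k) / m) / fact k \<ge> 0"
      using N m by auto
    have "norm (KC N \<beta> m k * w ^ k) = t0^k * (Gamma (real (N+k)) / Gamma (real (N+k) / m)) / fact k"
      unfolding t0_def by (rule KC_norm[OF N m \<beta>])
    also have "\<dots> = t0^k * (Gamma (real (N+k)) / Gamma (real (N+k) / m) / fact k)" by simp
    also have "\<dots> \<le> t^k * (Gamma (real (N+k)) / Gamma (real (N+k) / m) / fact k)"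
      using Gp t0 t unfolding t0_def by (intro mult_right_mono power_mono) auto
    also have "\<dots> = t^k * (Gamma (real (N+k)) / Gamma (real (N+k) / m)) / fact k" by simp
    also have "\<dots> \<le> 2 * exp (a+1) * a * (Gamma (real (N+k)) / fact k * (lam powr (-1/m))^k)"
      by (rule term_bound[OF N m lam tt]) (simp add: a_def)
    finally show ?thesis .
  qed
  show sn: "summable (\<lambda>k. norm (KC N \<beta> m k * w ^ k))"
    by (rule summable_comparison_test'[OF sc2]) (use bnd in auto)
  have "norm (\<Sum>k. KC N \<beta> m k * w ^ k) \<le> (\<Sum>k. norm (KC N \<beta> m k * w ^ k))"
    by (rule summable_norm[OF sn])
  also have "\<dots> \<le> (\<Sum>k. 2 * exp (a+1) * a * (Gamma (real (N+k)) / fact k * (lam powr (-1/m))^k))"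
    by (rule suminf_le[OF bnd sn sc2])
  also have "\<dots> = 2 * exp (a+1) * a * T"
    unfolding T_def using suminf_mult[OF sc, of "2 * exp (a+1) * a"] by simp
  finally show "norm (\<Sum>k. KC N \<beta> m k * w ^ k) \<le> 2 * exp (a+1) * a * T" .
qed

lemma Kern_eq:
  "Kern \<beta> m x (y :: complex^'n) = complex_of_real (m * \<beta> powr (real CARD('n) / m) / pi ^ CARD('n)) *
     (\<Sum>k. KC CARD('n) \<beta> m k * (cinner x y) ^ k)"
  unfolding Kern_def KC_def by (simp add: power_mult_distrib ac_simps)

lemma KC_continuous:
  assumes "m > 0" "\<beta> > 0" "N \<ge> 1"
  shows "continuous_on UNIV (\<lambda>w. \<Sum>k. KC N \<beta> m k * w ^ k)"
proof -
  have "isCont (\<lambda>w. \<Sum>k. KC N \<beta> m k * w ^ k) w" for w :: complex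
  proof (rule isCont_powser)
    let ?K = "complex_of_real (norm w + 1)"
    show "summable (\<lambda>k. KC N \<beta> m k * ?K ^ k)"
      by (rule summable_norm_cancel, rule series_bound(1)[where lam=2]) (use assms in auto)
    show "norm w < norm ?K" by simp
  qed
  thus ?thesis by (simp add: continuous_on_eq_continuous_at)
qed

lemma Kern_continuous:
  assumes "m > 0" "\<beta> > 0"
  shows "continuous_on UNIV (\<lambda>p. Kern \<beta> m (fst p) (snd p :: complex^'n))"
proof -
  have c1: "continuous_on UNIV (\<lambda>p. cinner (fst p) (snd p :: complex^'n))"
    unfolding cinner_def by (intro continuous_intros)
  have "continuous_on UNIV ((\<lambda>w. \<Sum>k. KC CARD('n) \<beta> m k * w ^ k) \<circ> (\<lambda>p. cinner (fst p) (snd p :: complex^'n)))"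
    by (rule continuous_on_compose[OF c1]) (rule continuous_on_subset[OF KC_continuous], use assms in auto)
  thus ?thesis unfolding Kern_eq o_def by (intro continuous_intros) auto
qed

lemma Kern_bound:
  fixes \<beta> m lam \<delta> :: real
  assumes m: "m > 0" and \<beta>: "\<beta> > 0" and lam: "lam > 1" and \<delta>: "\<delta> > 0"
  shows "\<exists>D. \<forall>x y :: complex^'n. norm (Kern \<beta> m x y) \<le> D * exp ((1+\<delta>) * lam * \<beta> * (norm x * norm y) powr m)"
proof -
  define N where "N = CARD('n)"
  have N: "N \<ge> 1" unfolding N_def by (simp add: Suc_le_eq)
  define M0 where "M0 = m * \<beta> powr (real CARD('n) / m) / pi ^ CARD('n)"
  define T where "T = (\<Sum>k. Gamma (real (N+k)) / fact k * (lam powr (-1/m))^k)"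
  have r1: "lam powr (-1/m) < 1" using lam m by (intro powr_less_one) auto
  have T0: "T \<ge> 0" unfolding T_def
    using coef_summable[OF N _ r1] lam m N
    by (intro suminf_nonneg) auto
  define D where "D = \<bar>M0\<bar> * 2 * T * exp (1+\<delta>+1) / \<delta>"
  have "norm (Kern \<beta> m x y) \<le> D * exp ((1+\<delta>) * lam * \<beta> * (norm x * norm y) powr m)" for x y :: "complex^'n"
  proof -
    define t where "t = \<beta> powr (1/m) * (norm x * norm y)"
    define a where "a = lam * t powr m + 1"
    have t0: "t \<ge> 0" unfolding t_def by simp
    have a1: "a \<ge> 1" unfolding a_def using lam t0 by simp
    have tle: "\<beta> powr (1/m) * norm (cinner x y) \<le> t"
      unfolding t_def using cinner_bound[of x y] \<beta> by (intro mult_left_mono) auto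
    have sb: "norm (\<Sum>k. KC N \<beta> m k * (cinner x y) ^ k) \<le> 2 * exp (a+1) * a * T"
      unfolding a_def T_def by (rule series_bound(2)[OF N m \<beta> lam tle])
    have tm: "t powr m = \<beta> * (norm x * norm y) powr m"
      unfolding t_def using \<beta> m by (simp add: powr_mult powr_powr)
    have aexp: "a \<le> exp (\<delta> * a) / \<delta>"
    proof -
      have "1 + \<delta> * a \<le> exp (\<delta> * a)" by (rule exp_ge_add_one_self)
      hence "\<delta> * a \<le> exp (\<delta> * a)" by linarith
      thus ?thesis using \<delta> by (simp add: field_simps)
    qed
    have "norm (Kern \<beta> m x y) = \<bar>M0\<bar> * norm (\<Sum>k. KC N \<beta> m k * (cinner x y) ^ k)"
      unfolding Kern_eq M0_def N_def norm_mult norm_of_real by (rule refl)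
    also have "\<dots> \<le> \<bar>M0\<bar> * (2 * exp (a+1) * a * T)"
      using sb by (intro mult_left_mono) auto
    also have "\<dots> \<le> \<bar>M0\<bar> * (2 * exp (a+1) * (exp (\<delta> * a) / \<delta>) * T)"
      using aexp T0 by (intro mult_left_mono mult_right_mono) auto
    also have "\<dots> = \<bar>M0\<bar> * 2 * T / \<delta> * exp ((1+\<delta>) * a + 1)"
      by (simp add: exp_add[symmetric] algebra_simps)
    also have "(1+\<delta>) * a + 1 = (1+\<delta>+1) + (1+\<delta>) * lam * \<beta> * (norm x * norm y) powr m"
      unfolding a_def tm by (simp add: algebra_simps)
    also have "\<bar>M0\<bar> * 2 * T / \<delta> * exp (\<dots>) = D * exp ((1+\<delta>) * lam * \<beta> * (norm x * norm y) powr m)"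
      unfolding D_def by (simp add: exp_add)
    finally show ?thesis .
  qed
  thus ?thesis by blast
qed




lemma cauchy_integrable: "integrable lborel (\<lambda>t::real. 1 / (1 + t\<^sup>2))"
proof -
  let ?g = "\<lambda>t::real. 1 / (1 + t\<^sup>2)"
  let ?h = "\<lambda>t::real. ?g t * indicator {0..} t"
  have pos: "1 + t\<^sup>2 > 0" for t :: real by (simp add: add_pos_nonneg)
  have gb: "?g \<in> borel_measurable borel"
    by (intro borel_measurable_continuous_onI continuous_intros) (metis pos less_irrefl)
  have I: "(\<integral>\<^sup>+x. ennreal (?g x) * indicator {0 ..} x \<partial>lborel) = ennreal (pi / 2 - arctan 0)"
  proof (rule nn_integral_FTC_atLeast[where F=arctan])
    show "((\<lambda>a. arctan a) \<longlongrightarrow> pi / 2) at_top" by (rule tendsto_arctan_at_top)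
  qed (use gb pos in \<open>auto intro!: derivative_eq_intros simp: field_simps power2_eq_square\<close>)
  have hI: "integrable lborel ?h"
  proof (rule integrableI_nonneg)
    show "?h \<in> borel_measurable lborel" using gb by measurable
    show "AE x in lborel. 0 \<le> ?h x" using pos by (auto intro!: AE_I2 simp: less_imp_le)
    have "(\<integral>\<^sup>+x. ennreal (?h x) \<partial>lborel) = (\<integral>\<^sup>+x. ennreal (?g x) * indicator {0 ..} x \<partial>lborel)"
      by (intro nn_integral_cong) (simp split: split_indicator)
    also have "\<dots> < \<infinity>" using I by simp
    finally show "(\<integral>\<^sup>+x. ennreal (?h x) \<partial>lborel) < \<infinity>" .
  qed
  have hI2: "integrable lborel (\<lambda>x. ?h (0 + (-1) * x))"
    by (rule lborel_integrable_real_affine[OF hI]) simp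
  show ?thesis
  proof (rule Bochner_Integration.integrable_bound[OF Bochner_Integration.integrable_add[OF hI hI2]])
    show "?g \<in> borel_measurable lborel" using gb by simp
    show "AE x in lborel. norm (?g x) \<le> norm (?h x + ?h (0 + (-1) * x))"
      using pos by (intro AE_I2) (auto simp: indicator_def less_imp_le)
  qed
qed

lemma poly_le_exp_norm:
  fixes d m :: real and D :: nat
  assumes d: "d > 0" and m: "m > 0" and D: "D \<ge> 1"
  shows "\<exists>C. \<forall>r\<ge>0. (1 + r\<^sup>2)^D \<le> C * exp (d * r powr (2*m))"
proof -
  obtain C where C: "C > 0" "\<And>u. u \<ge> 0 \<Longrightarrow> u powr (real D / m) \<le> C * exp (d * u)"
    using powr_le_exp[of "real D / m" d] d m by auto
  have "(1 + r\<^sup>2)^D \<le> 2^D * (1 + C) * exp (d * r powr (2*m))" if r: "r \<ge> 0" for r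
  proof -
    have e1: "1 \<le> exp (d * r powr (2*m))" using d by simp
    have rr: "r ^ (2*D) = (r powr (2*m)) powr (real D / m)"
    proof (cases "r = 0")
      case True thus ?thesis using D by simp
    next
      case False
      hence "r > 0" using r by simp
      thus ?thesis using m by (simp add: powr_powr powr_realpow[symmetric])
    qed
    have "(1 + r\<^sup>2)^D \<le> 2^D * (1 + r^(2*D))"
    proof (cases "r \<le> 1")
      case True
      hence "1 + r\<^sup>2 \<le> 2" using r by (simp add: power_le_one)
      hence "(1 + r\<^sup>2)^D \<le> 2^D" by (intro power_mono) auto
      thus ?thesis by (simp add: add_nonneg_nonneg ring_distribs) (smt (verit) zero_le_power r mult_nonneg_nonneg)
    next
      case False
      hence "1 + r\<^sup>2 \<le> 2 * r\<^sup>2" by (simp add: power2_eq_square) (smt (verit) mult_less_cancel_left1 r)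
      hence "(1 + r\<^sup>2)^D \<le> (2 * r\<^sup>2)^D" by (intro power_mono) auto
      also have "\<dots> = 2^D * r^(2*D)" by (simp add: power_mult_distrib power_mult[symmetric] mult.commute)
      finally show ?thesis by (smt (verit) zero_le_power mult_left_mono)
    qed
    also have "\<dots> \<le> 2^D * (1 + C * exp (d * r powr (2*m)))"
      using C(2)[of "r powr (2*m)"] rr by (intro mult_left_mono) auto
    also have "\<dots> \<le> 2^D * ((1 + C) * exp (d * r powr (2*m)))"
      using e1 C(1) by (intro mult_left_mono) (auto simp: distrib_right)
    finally show ?thesis by simp
  qed
  thus ?thesis by blast
qed

lemma id_leb: "(\<lambda>x::'a::euclidean_space. x) \<in> borel_measurable lebesgue"
  by (rule measurable_completion) simp

lemma exp_norm_integrable: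
  fixes d m :: real
  assumes d: "d > 0" and m: "m > 0"
  shows "integrable lebesgue (\<lambda>y::'a::euclidean_space. exp (- d * norm y powr (2*m)))"
proof -
  let ?g = "\<lambda>t::real. 1 / (1 + t\<^sup>2)"
  let ?P = "\<lambda>y::'a. \<Prod>b\<in>Basis. ?g (y \<bullet> b)"
  interpret product_sigma_finite "\<lambda>_. lborel" by standard
  have pos: "1 + t\<^sup>2 > 0" for t :: real by (simp add: add_pos_nonneg)
  have gb: "?g \<in> borel_measurable borel"
    by (intro borel_measurable_continuous_onI continuous_intros) (metis pos less_irrefl)
  have PI: "integrable (Pi\<^sub>M Basis (\<lambda>_. lborel)) (\<lambda>f. \<Prod>b\<in>Basis. ?g (f b))"
    by (rule product_integrable_prod) (auto intro: cauchy_integrable)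
  have Pb: "?P \<in> borel_measurable borel"
    by (intro borel_measurable_continuous_onI continuous_intros) (metis pos less_irrefl)
  have Pl: "integrable lborel ?P"
  proof -
    have "integrable (distr (Pi\<^sub>M Basis (\<lambda>_. lborel)) borel (\<lambda>f. \<Sum>b\<in>Basis. f b *\<^sub>R b)) ?P"
    proof (subst integrable_distr_eq)
      show "(\<lambda>f. \<Sum>b\<in>Basis. f b *\<^sub>R b) \<in> measurable (Pi\<^sub>M Basis (\<lambda>_. lborel)) borel" by measurable
      show "?P \<in> borel_measurable borel" by (rule Pb)
      have ib: "(\<Sum>b'\<in>Basis. f b' *\<^sub>R b') \<bullet> b = f b" if "b \<in> Basis" for b :: 'a and f
        using that by (simp add: inner_sum_left inner_Basis if_distrib cong: if_cong)
      have "(\<lambda>x. ?P (\<Sum>b\<in>Basis. x b *\<^sub>R b)) = (\<lambda>f. \<Prod>b\<in>Basis. ?g (f b))"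
        by (intro ext prod.cong refl) (simp add: ib)
      thus "integrable (Pi\<^sub>M Basis (\<lambda>_. lborel)) (\<lambda>x. ?P (\<Sum>b\<in>Basis. x b *\<^sub>R b))" using PI by simp
    qed
    thus ?thesis by (simp add: lborel_eq[symmetric])
  qed
  hence PL: "integrable lebesgue ?P" using Pb by (subst integrable_completion) auto
  obtain C where C: "\<And>r. r \<ge> 0 \<Longrightarrow> (1 + r\<^sup>2)^DIM('a) \<le> C * exp (d * r powr (2*m))"
    using poly_le_exp_norm[OF d m, of "DIM('a)"] by (auto simp: Suc_le_eq)
  show ?thesis
  proof (rule Bochner_Integration.integrable_bound[OF Bochner_Integration.integrable_mult_right[OF PL, of C]])
    show "(\<lambda>y::'a. exp (- d * norm y powr (2*m))) \<in> borel_measurable lebesgue"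
    proof -
      note id_leb[measurable]
      show ?thesis by measurable
    qed
    show "AE y in lebesgue. norm (exp (- d * norm y powr (2*m))) \<le> norm (C * ?P y)"
    proof (intro AE_I2)
      fix y :: 'a
      let ?r = "norm y"
      have "(\<Prod>b\<in>Basis. (1 + (y \<bullet> b)\<^sup>2)) \<le> (\<Prod>b\<in>(Basis::'a set). (1 + ?r\<^sup>2))"
      proof (intro prod_mono conjI)
        fix b :: 'a assume "b \<in> Basis"
        hence "\<bar>y \<bullet> b\<bar> \<le> ?r" by (rule Basis_le_norm)
        hence "(y \<bullet> b)\<^sup>2 \<le> ?r\<^sup>2" using abs_le_square_iff[of "y \<bullet> b" "norm y"] by simp
        thus "1 + (y \<bullet> b)\<^sup>2 \<le> 1 + ?r\<^sup>2" by simp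
      qed (use pos in \<open>auto simp: less_imp_le\<close>)
      hence Q: "(\<Prod>b\<in>Basis. (1 + (y \<bullet> b)\<^sup>2)) \<le> (1 + ?r\<^sup>2)^DIM('a)" by simp
      have Qp: "(\<Prod>b\<in>(Basis::'a set). (1 + (y \<bullet> b)\<^sup>2)) > 0" using pos by (intro prod_pos) auto
      have "?P y = 1 / (\<Prod>b\<in>Basis. (1 + (y \<bullet> b)\<^sup>2))" by (simp add: prod_dividef)
      have Ce: "(1 + ?r\<^sup>2)^DIM('a) \<le> C * exp (d * ?r powr (2*m))" by (rule C) simp
      have "exp (- d * ?r powr (2*m)) = 1 / exp (d * ?r powr (2*m))" by (simp add: exp_minus field_simps)
      also have "\<dots> \<le> C / (1 + ?r\<^sup>2)^DIM('a)"
        using Ce pos by (simp add: field_simps)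
      also have "\<dots> \<le> C / (\<Prod>b\<in>Basis. (1 + (y \<bullet> b)\<^sup>2))"
      proof (rule divide_left_mono[OF Q])
        have "0 < (1 + ?r\<^sup>2)^DIM('a)" using pos[of ?r] by simp
        hence "0 < C * exp (d * ?r powr (2*m))" using Ce by linarith
        thus "0 \<le> C" by (simp add: zero_less_mult_iff)
      qed (use Qp pos in auto)
      also have "\<dots> = C * ?P y" by (simp add: prod_dividef)
      finally have "exp (- d * ?r powr (2*m)) \<le> C * ?P y" .
      moreover have "C * ?P y \<ge> 0" using calculation by (smt (verit) exp_gt_zero)
      ultimately show "norm (exp (- d * ?r powr (2*m))) \<le> norm (C * ?P y)" by simp
    qed
  qed
qed




lemma pw_young:
  fixes a b p lam :: real
  assumes a: "a \<ge> 0" and b: "0 \<le> b" "b \<le> 1" and p: "p \<ge> 1" and lam: "lam > 0"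
  shows "a * b \<le> lam powr (p-1) * a powr p + b / lam"
proof -
  define u where "u = lam * a"
  have u0: "u \<ge> 0" unfolding u_def using a lam by simp
  have uu: "u \<le> u powr p + 1"
  proof (cases "u \<le> 1")
    case True thus ?thesis by (smt (verit) powr_ge_zero)
  next
    case False
    hence "u powr 1 \<le> u powr p" using p by (intro powr_mono) auto
    thus ?thesis using False by simp
  qed
  have "u * b \<le> (u powr p + 1) * b" using uu b by (intro mult_right_mono) auto
  also have "\<dots> = u powr p * b + b" by (simp add: algebra_simps)
  also have "\<dots> \<le> u powr p + b" using b by (smt (verit) mult_left_le powr_ge_zero)
  finally have ub: "u * b \<le> u powr p + b" .
  have up: "u powr p = lam * (lam powr (p-1) * a powr p)"
  proof -
    have "u powr p = lam powr p * a powr p" unfolding u_def using a lam by (simp add: powr_mult)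
    also have "lam powr p = lam powr (1 + (p-1))" by simp
    also have "\<dots> = lam * lam powr (p-1)" using lam powr_add[of lam 1 "p-1"] by simp
    finally show ?thesis by simp
  qed
  have "lam * (a * b) \<le> lam * (lam powr (p-1) * a powr p + b / lam)"
    using ub up lam unfolding u_def by (simp add: algebra_simps)
  thus ?thesis using lam by simp
qed

lemma holder_like:
  fixes g \<phi> :: "'a \<Rightarrow> real" and p :: real
  assumes p: "p \<ge> 1"
    and gm: "g \<in> borel_measurable M" and \<phi>m: "\<phi> \<in> borel_measurable M"
    and g0: "\<And>x. g x \<ge> 0" and \<phi>0: "\<And>x. 0 \<le> \<phi> x" and \<phi>1: "\<And>x. \<phi> x \<le> 1"
    and gi: "integrable M (\<lambda>x. g x powr p)" and \<phi>i: "integrable M \<phi>"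
  shows "integrable M (\<lambda>x. g x * \<phi> x)"
    and "(\<integral>x. g x * \<phi> x \<partial>M) \<le> (1 + (\<integral>x. \<phi> x \<partial>M)) * (\<integral>x. g x powr p \<partial>M) powr (1/p)"
proof -
  define G where "G = (\<integral>x. g x powr p \<partial>M)"
  define \<Phi> where "\<Phi> = (\<integral>x. \<phi> x \<partial>M)"
  have G0: "G \<ge> 0" unfolding G_def by (intro integral_nonneg_AE) auto
  have \<Phi>0: "\<Phi> \<ge> 0" unfolding \<Phi>_def using \<phi>0 by (intro integral_nonneg_AE) auto
  have bnd: "\<And>x. g x * \<phi> x \<le> lam powr (p-1) * g x powr p + \<phi> x / lam" if "lam > 0" for lam
    using pw_young[OF g0 \<phi>0 \<phi>1 p that] .
  have int2: "integrable M (\<lambda>x. lam powr (p-1) * g x powr p + \<phi> x / lam)" for lam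
    using gi \<phi>i by auto
  show gi2: "integrable M (\<lambda>x. g x * \<phi> x)"
  proof (rule Bochner_Integration.integrable_bound[OF int2[of 1]])
    show "(\<lambda>x. g x * \<phi> x) \<in> borel_measurable M" using gm \<phi>m by measurable
    show "AE x in M. norm (g x * \<phi> x) \<le> norm (1 powr (p-1) * g x powr p + \<phi> x / 1)"
      using bnd[of 1] g0 \<phi>0 by (intro AE_I2) (auto simp: abs_mult)
  qed
  have I: "(\<integral>x. g x * \<phi> x \<partial>M) \<le> lam powr (p-1) * G + \<Phi> / lam" if lam: "lam > 0" for lam
  proof -
    have "(\<integral>x. g x * \<phi> x \<partial>M) \<le> (\<integral>x. lam powr (p-1) * g x powr p + \<phi> x / lam \<partial>M)"
      using bnd[OF lam] by (intro integral_mono gi2 int2)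
    also have "\<dots> = lam powr (p-1) * G + \<Phi> / lam"
      unfolding G_def \<Phi>_def using gi \<phi>i by simp
    finally show ?thesis .
  qed
  show "(\<integral>x. g x * \<phi> x \<partial>M) \<le> (1 + (\<integral>x. \<phi> x \<partial>M)) * (\<integral>x. g x powr p \<partial>M) powr (1/p)"
    unfolding G_def[symmetric] \<Phi>_def[symmetric]
  proof (cases "G = 0")
    case True
    show "(\<integral>x. g x * \<phi> x \<partial>M) \<le> (1 + \<Phi>) * G powr (1/p)"
    proof (rule ccontr)
      assume "\<not> ?thesis"
      hence Ip: "(\<integral>x. g x * \<phi> x \<partial>M) > 0" using True by simp
      define lam where "lam = (\<Phi> + 1) / (\<integral>x. g x * \<phi> x \<partial>M)"
      have lp: "lam > 0" unfolding lam_def using Ip \<Phi>0 by simp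
      have "(\<integral>x. g x * \<phi> x \<partial>M) \<le> \<Phi> / lam" using I[OF lp] True by simp
      also have "\<dots> = \<Phi> * (\<integral>x. g x * \<phi> x \<partial>M) / (\<Phi> + 1)" unfolding lam_def using Ip \<Phi>0 by simp
      also have "\<dots> < (\<integral>x. g x * \<phi> x \<partial>M)" using Ip \<Phi>0 by (simp add: field_simps)
      finally show False by simp
    qed
  next
    case False
    hence Gp: "G > 0" using G0 by simp
    define lam where "lam = G powr (-1/p)"
    have lp: "lam > 0" unfolding lam_def using Gp by simp
    have e1: "lam powr (p-1) * G = G powr (1/p)"
    proof -
      have "lam powr (p-1) * G = G powr (-1/p * (p-1)) * G powr 1"
        unfolding lam_def using Gp by (simp add: powr_powr)
      also have "\<dots> = G powr (-1/p * (p-1) + 1)" using Gp powr_add[of G "-1/p * (p-1)" 1] by simp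
      also have "-1/p * (p-1) + 1 = 1/p" using p by (simp add: field_simps)
      finally show ?thesis .
    qed
    have e2: "\<Phi> / lam = \<Phi> * G powr (1/p)"
      unfolding lam_def using Gp by (simp add: powr_minus_divide powr_minus divide_inverse)
    have "(\<integral>x. g x * \<phi> x \<partial>M) \<le> lam powr (p-1) * G + \<Phi> / lam" by (rule I[OF lp])
    also have "\<dots> = (1 + \<Phi>) * G powr (1/p)" using e1 e2 by (simp add: algebra_simps)
    finally show "(\<integral>x. g x * \<phi> x \<partial>M) \<le> (1 + \<Phi>) * G powr (1/p)" .
  qed
qed

lemma sf_leb: "sigma_finite_measure (lebesgue :: 'a::euclidean_space measure)"
proof
  obtain A :: "'a set set" where A: "countable A" "A \<subseteq> sets lborel" "\<Union>A = space lborel"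
      "\<forall>a\<in>A. emeasure lborel a \<noteq> \<infinity>"
    using sigma_finite_lborel unfolding sigma_finite_measure_def by blast
  show "\<exists>A::'a set set. countable A \<and> A \<subseteq> sets lebesgue \<and> \<Union>A = space lebesgue \<and> (\<forall>a\<in>A. emeasure lebesgue a \<noteq> \<infinity>)"
    using A by (intro exI[of _ A]) auto
qed




lemma exp_powr_real: "exp (x::real) powr p = exp (p * x)"
  by (simp add: powr_def)

lemma cont_leb: "continuous_on UNIV h \<Longrightarrow> (h :: 'a::euclidean_space \<Rightarrow> 'b::{second_countable_topology, topological_space}) \<in> borel_measurable lebesgue"
  by (rule measurable_completion) (simp add: borel_measurable_continuous_onI)

lemma powr2: "(x::real) \<ge> 0 \<Longrightarrow> (x powr m)^2 = x powr (2*m)"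
  by (simp add: power2_eq_square powr_add[symmetric])

theorem proposition9:
  fixes \<alpha> \<beta> \<gamma> m p q :: real
  assumes "m > 0" and "\<beta> > 0" and "\<gamma> > 0" and "1 \<le> p" and "1 \<le> q"
    and "4 * \<gamma> / (\<beta>\<^sup>2 * q) * (\<beta> - \<alpha> / p) > 1"
  shows "(\<forall>f \<in> (Lpw \<alpha> m p :: (complex^'n \<Rightarrow> complex) set).
            \<forall>x. integrable lebesgue (Pint \<beta> m f x))
       \<and> (\<exists>C. \<forall>f \<in> (Lpw \<alpha> m p :: (complex^'n \<Rightarrow> complex) set).
            Pop \<beta> m f \<in> Lpw \<gamma> m q \<and> Lpw_norm \<gamma> m q (Pop \<beta> m f) \<le> C * Lpw_norm \<alpha> m p f)"
proof -
  note m = assms(1) and \<beta> = assms(2) and \<gamma> = assms(3) and p = assms(4) and q = assms(5)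
  define B where "B = \<beta> - \<alpha> / p"
  define c0 where "c0 = 4 * \<gamma> / (\<beta>\<^sup>2 * q) * B"
  have c0: "c0 > 1" using assms(6) unfolding c0_def B_def .
  have pre: "4 * \<gamma> / (\<beta>\<^sup>2 * q) > 0" using \<beta> \<gamma> q by simp
  have Bp: "B > 0"
  proof -
    have h: "0 < 4 * \<gamma> / (\<beta>\<^sup>2 * q) * B" using c0 unfolding c0_def by linarith
    show ?thesis
    proof (rule ccontr)
      assume "\<not> B > 0"
      hence "4 * \<gamma> / (\<beta>\<^sup>2 * q) * B \<le> 0" using pre by (intro mult_nonneg_nonpos) auto
      thus False using h by linarith
    qed
  qed
  have c0B: "q * \<beta>\<^sup>2 / (4 * B) = \<gamma> / c0"
    unfolding c0_def using Bp \<beta> \<gamma> q by (simp add: field_simps)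
  define L1 where "L1 = c0 powr (1/8)"
  have L1: "L1 > 1" unfolding L1_def using c0 by simp
  define L where "L = L1 * L1"
  have L: "L > 1" unfolding L_def using L1 less_1_mult by blast
  have L3: "L^3 < c0"
  proof -
    have "L^3 = c0 powr (6/8)" unfolding L_def L1_def using c0
      by (simp add: power3_eq_cube powr_add[symmetric])
    also have "\<dots> < c0 powr 1" using c0 by (intro powr_less_mono) auto
    finally show ?thesis using c0 by simp
  qed
  obtain D where D: "\<And>x y :: complex^'n. norm (Kern \<beta> m x y) \<le> D * exp ((1 + (L1 - 1)) * L1 * \<beta> * (norm x * norm y) powr m)"
    using Kern_bound[OF m \<beta> L1, of "L1 - 1"] L1 by auto
  have DK: "norm (Kern \<beta> m x y) \<le> D * exp (L * \<beta> * (norm x powr m * norm y powr m))" for x y :: "complex^'n"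
    using D[of x y] unfolding L_def by (simp add: powr_mult)
  have D0: "D \<ge> 0"
  proof -
    have "0 \<le> norm (Kern \<beta> m (0::complex^'n) 0)" by simp
    also have "\<dots> \<le> D * exp (L * \<beta> * (norm (0::complex^'n) powr m * norm (0::complex^'n) powr m))" by (rule DK)
    finally show ?thesis by (simp add: zero_le_mult_iff)
  qed
  define B' where "B' = B / L"
  have B'p: "B' > 0" unfolding B'_def using Bp L by simp
  define A where "A = (L * \<beta>)\<^sup>2 / (4 * B')"
  have A0: "A \<ge> 0" unfolding A_def using B'p by simp
  define \<delta> where "\<delta> = B - B'"
  have \<delta>p: "\<delta> > 0" unfolding \<delta>_def B'_def using Bp L by (simp add: field_simps)
  have qA: "q * A < \<gamma>"
  proof -
    have "q * A = L^3 * (q * \<beta>\<^sup>2 / (4 * B))" unfolding A_def B'_def using Bp L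
      by (simp add: field_simps power2_eq_square power3_eq_cube)
    also have "\<dots> = L^3 * (\<gamma> / c0)" by (simp add: c0B)
    also have "\<dots> < c0 * (\<gamma> / c0)" using L3 \<gamma> c0 by (intro mult_strict_right_mono) auto
    also have "\<dots> = \<gamma>" using c0 by simp
    finally show ?thesis .
  qed
  define \<epsilon> where "\<epsilon> = \<gamma> - q * A"
  have \<epsilon>p: "\<epsilon> > 0" unfolding \<epsilon>_def using qA by simp
  have KB: "norm (Kern \<beta> m x y) * exp (- \<beta> * norm y powr (2*m)) * exp (\<alpha> / p * norm y powr (2*m))
      \<le> D * exp (A * norm x powr (2*m)) * exp (- \<delta> * norm y powr (2*m))" for x y :: "complex^'n"
  proof -
    define X where "X = L * \<beta> * norm x powr m"
    define Y where "Y = norm y powr m"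
    have amgm: "X * Y \<le> X\<^sup>2 / (4 * B') + B' * Y\<^sup>2"
    proof -
      have "0 \<le> (X - 2 * B' * Y)\<^sup>2" by simp
      hence "4 * B' * (X * Y) \<le> X\<^sup>2 + 4 * B'\<^sup>2 * Y\<^sup>2" by (simp add: power2_eq_square algebra_simps)
      hence "X * Y \<le> (X\<^sup>2 + 4 * B'\<^sup>2 * Y\<^sup>2) / (4 * B')" using B'p by (simp add: field_simps)
      thus ?thesis using B'p by (simp add: field_simps power2_eq_square)
    qed
    have X2: "X\<^sup>2 / (4 * B') = A * norm x powr (2*m)"
      unfolding X_def A_def by (simp add: power_mult_distrib powr2)
    have Y2: "Y\<^sup>2 = norm y powr (2*m)" unfolding Y_def by (simp add: powr2)
    have ex: "L * \<beta> * (norm x powr m * norm y powr m) + (- \<beta> * norm y powr (2*m)) + \<alpha> / p * norm y powr (2*m)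
        \<le> A * norm x powr (2*m) - \<delta> * norm y powr (2*m)"
    proof -
      have "L * \<beta> * (norm x powr m * norm y powr m) = X * Y" unfolding X_def Y_def by simp
      also have "\<dots> \<le> A * norm x powr (2*m) + B' * norm y powr (2*m)" using amgm X2 Y2 by simp
      finally show ?thesis unfolding \<delta>_def B_def by (simp add: algebra_simps)
    qed
    have "norm (Kern \<beta> m x y) * exp (- \<beta> * norm y powr (2*m)) * exp (\<alpha> / p * norm y powr (2*m))
        \<le> D * exp (L * \<beta> * (norm x powr m * norm y powr m)) * exp (- \<beta> * norm y powr (2*m)) * exp (\<alpha> / p * norm y powr (2*m))"
      using DK[of x y] by (intro mult_right_mono) auto
    also have "\<dots> = D * exp (L * \<beta> * (norm x powr m * norm y powr m) + (- \<beta> * norm y powr (2*m)) + \<alpha> / p * norm y powr (2*m))"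
      by (simp only: exp_add mult.assoc)
    also have "\<dots> \<le> D * exp (A * norm x powr (2*m) - \<delta> * norm y powr (2*m))"
      using ex D0 by (intro mult_left_mono) auto
    also have "\<dots> = D * exp (A * norm x powr (2*m)) * exp (- \<delta> * norm y powr (2*m))"
      by (simp add: exp_diff exp_minus field_simps)
    finally show ?thesis .
  qed
  define \<phi> :: "complex^'n \<Rightarrow> real" where "\<phi> y = exp (- \<delta> * norm y powr (2*m))" for y
  have \<phi>i: "integrable lebesgue \<phi>" unfolding \<phi>_def by (rule exp_norm_integrable[OF \<delta>p m])
  have \<phi>m: "\<phi> \<in> borel_measurable lebesgue" using \<phi>i by auto
  have \<phi>01: "0 \<le> \<phi> y" "\<phi> y \<le> 1" for y unfolding \<phi>_def using \<delta>p by auto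
  define \<Phi> where "\<Phi> = (\<integral>y. \<phi> y \<partial>lebesgue)"
  have \<Phi>0: "\<Phi> \<ge> 0" unfolding \<Phi>_def using \<phi>01 by (intro integral_nonneg_AE) auto
  define \<psi> :: "complex^'n \<Rightarrow> real" where "\<psi> y = exp (- \<epsilon> * norm y powr (2*m))" for y
  have \<psi>i: "integrable lebesgue \<psi>" unfolding \<psi>_def by (rule exp_norm_integrable[OF \<epsilon>p m])
  define \<Psi> where "\<Psi> = (\<integral>y. \<psi> y \<partial>lebesgue)"
  have \<Psi>0: "\<Psi> \<ge> 0" unfolding \<Psi>_def \<psi>_def by (intro integral_nonneg_AE) auto
  define E where "E = D * (1 + \<Phi>)"
  have E0: "E \<ge> 0" unfolding E_def using D0 \<Phi>0 by simp
  note id_leb[measurable]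
  have Kc: "continuous_on UNIV (\<lambda>p. Kern \<beta> m (fst p) (snd p :: complex^'n))"
    by (rule Kern_continuous[OF m \<beta>])
  have Km: "(\<lambda>y. Kern \<beta> m x y) \<in> borel_measurable lebesgue" for x :: "complex^'n"
  proof (rule cont_leb)
    have "continuous_on UNIV ((\<lambda>p. Kern \<beta> m (fst p) (snd p :: complex^'n)) \<circ> (\<lambda>y. (x, y)))"
      by (rule continuous_on_compose[OF _ continuous_on_subset[OF Kc]]) (auto intro!: continuous_intros)
    thus "continuous_on UNIV (\<lambda>y. Kern \<beta> m x y)" by (simp add: o_def)
  qed
  have Kjm: "(\<lambda>p. Kern \<beta> m (fst p) (snd p)) \<in> borel_measurable (lebesgue \<Otimes>\<^sub>M (lebesgue :: (complex^'n) measure))"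
    by (rule borel_measurable_continuous_Pair[OF _ _ Kc]) measurable
  have wm: "(\<lambda>y. wgt a m y) \<in> borel_measurable lebesgue" for a
    unfolding wgt_def by measurable
  have main: "(\<forall>x. integrable lebesgue (Pint \<beta> m f x)) \<and> Pop \<beta> m f \<in> Lpw \<gamma> m q \<and>
      Lpw_norm \<gamma> m q (Pop \<beta> m f) \<le> (E * \<Psi> powr (1/q)) * Lpw_norm \<alpha> m p f"
    if f: "f \<in> (Lpw \<alpha> m p :: (complex^'n \<Rightarrow> complex) set)" for f
  proof -
    have fm[measurable]: "f \<in> borel_measurable lebesgue" using f unfolding Lpw_def by simp
    have fi: "integrable lebesgue (\<lambda>z. norm (f z) powr p * wgt \<alpha> m z)" using f unfolding Lpw_def by simp
    define g where "g z = norm (f z) * exp (- \<alpha> / p * norm z powr (2*m))" for z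
    have g0: "g z \<ge> 0" for z unfolding g_def by simp
    have gm: "g \<in> borel_measurable lebesgue" unfolding g_def by measurable
    have gp: "g z powr p = norm (f z) powr p * wgt \<alpha> m z" for z
    proof -
      have "g z powr p = norm (f z) powr p * exp (- \<alpha> / p * norm z powr (2*m)) powr p"
        unfolding g_def by (simp add: powr_mult)
      also have "exp (- \<alpha> / p * norm z powr (2*m)) powr p = wgt \<alpha> m z"
        unfolding wgt_def exp_powr_real using p by simp
      finally show ?thesis .
    qed
    have gi: "integrable lebesgue (\<lambda>z. g z powr p)" using fi by (simp add: gp)
    define G where "G = (\<integral>z. g z powr p \<partial>lebesgue)"
    have Nf: "Lpw_norm \<alpha> m p f = G powr (1/p)" unfolding Lpw_norm_def G_def by (simp add: gp)
    have Nf0: "Lpw_norm \<alpha> m p f \<ge> 0" unfolding Nf by simp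
    have H1: "integrable lebesgue (\<lambda>y. g y * \<phi> y)"
      by (rule holder_like(1)[OF p gm \<phi>m g0 \<phi>01 gi \<phi>i])
    have H2: "(\<integral>y. g y * \<phi> y \<partial>lebesgue) \<le> (1 + \<Phi>) * G powr (1/p)"
      unfolding \<Phi>_def G_def by (rule holder_like(2)[OF p gm \<phi>m g0 \<phi>01 gi \<phi>i])
    have Pm: "Pint \<beta> m f x \<in> borel_measurable lebesgue" for x
      unfolding Pint_def using Km[of x] wm[of \<beta>] by measurable
    have Pb: "norm (Pint \<beta> m f x y) \<le> D * exp (A * norm x powr (2*m)) * (g y * \<phi> y)" for x y
    proof -
      have ff: "norm (f y) = g y * exp (\<alpha> / p * norm y powr (2*m))"
        unfolding g_def by (simp add: exp_minus[symmetric] exp_add[symmetric] mult.assoc[symmetric])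
      have "norm (Pint \<beta> m f x y) = norm (f y) * norm (Kern \<beta> m x y) * wgt \<beta> m y"
        unfolding Pint_def wgt_def by (simp add: norm_mult)
      also have "\<dots> = g y * (norm (Kern \<beta> m x y) * exp (- \<beta> * norm y powr (2*m)) * exp (\<alpha> / p * norm y powr (2*m)))"
        unfolding ff wgt_def by (simp add: ac_simps)
      also have "\<dots> \<le> g y * (D * exp (A * norm x powr (2*m)) * exp (- \<delta> * norm y powr (2*m)))"
        using KB[of x y] g0 by (intro mult_left_mono) auto
      also have "\<dots> = D * exp (A * norm x powr (2*m)) * (g y * \<phi> y)" unfolding \<phi>_def by simp
      finally show ?thesis .
    qed
    have Pi: "integrable lebesgue (Pint \<beta> m f x)" for x
    proof (rule Bochner_Integration.integrable_bound[OF integrable_mult_right[OF H1, of "D * exp (A * norm x powr (2*m))"] Pm])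
      show "AE y in lebesgue. norm (Pint \<beta> m f x y) \<le> norm (D * exp (A * norm x powr (2*m)) * (g y * \<phi> y))"
        using Pb D0 g0 \<phi>01 by (intro AE_I2) (smt (verit) real_norm_def)
    qed
    have PopB: "norm (Pop \<beta> m f x) \<le> E * Lpw_norm \<alpha> m p f * exp (A * norm x powr (2*m))" for x
    proof -
      have "norm (Pop \<beta> m f x) \<le> (\<integral>y. D * exp (A * norm x powr (2*m)) * (g y * \<phi> y) \<partial>lebesgue)"
        unfolding Pop_def
        by (rule Bochner_Integration.integral_norm_bound_integral[OF Pi]) (use H1 Pb in auto)
      also have "\<dots> = D * exp (A * norm x powr (2*m)) * (\<integral>y. g y * \<phi> y \<partial>lebesgue)" by simp
      also have "\<dots> \<le> D * exp (A * norm x powr (2*m)) * ((1 + \<Phi>) * G powr (1/p))"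
        using H2 D0 by (intro mult_left_mono) auto
      also have "\<dots> = E * Lpw_norm \<alpha> m p f * exp (A * norm x powr (2*m))"
        unfolding E_def Nf by simp
      finally show ?thesis .
    qed
    have Pjm: "(\<lambda>(x, y). Pint \<beta> m f x y) \<in> borel_measurable (lebesgue \<Otimes>\<^sub>M (lebesgue :: (complex^'n) measure))"
    proof -
      have "(\<lambda>p. f (snd p) * Kern \<beta> m (fst p) (snd p) * complex_of_real (wgt \<beta> m (snd p)))
          \<in> borel_measurable (lebesgue \<Otimes>\<^sub>M (lebesgue :: (complex^'n) measure))"
        using Kjm wm[of \<beta>] by measurable
      thus ?thesis unfolding Pint_def by (simp add: case_prod_beta')
    qed
    have Popm: "Pop \<beta> m f \<in> borel_measurable lebesgue"
      unfolding Pop_def by (rule sigma_finite_measure.borel_measurable_lebesgue_integral[OF sf_leb Pjm])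
    define K where "K = E * Lpw_norm \<alpha> m p f"
    have K0: "K \<ge> 0" unfolding K_def using E0 Nf0 by simp
    have QB: "norm (Pop \<beta> m f x) powr q * wgt \<gamma> m x \<le> K powr q * \<psi> x" for x
    proof -
      have "norm (Pop \<beta> m f x) powr q \<le> (K * exp (A * norm x powr (2*m))) powr q"
        using PopB[of x] q unfolding K_def by (intro powr_mono2) auto
      also have "\<dots> = K powr q * exp (q * (A * norm x powr (2*m)))"
        using K0 by (simp add: powr_mult exp_powr_real)
      finally have "norm (Pop \<beta> m f x) powr q * wgt \<gamma> m x \<le> K powr q * exp (q * (A * norm x powr (2*m))) * wgt \<gamma> m x"
        unfolding wgt_def by (intro mult_right_mono) auto
      also have "\<dots> = K powr q * \<psi> x"
        unfolding wgt_def \<psi>_def \<epsilon>_def by (simp add: exp_add[symmetric] algebra_simps)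
      finally show ?thesis .
    qed
    have Qm: "(\<lambda>x. norm (Pop \<beta> m f x) powr q * wgt \<gamma> m x) \<in> borel_measurable lebesgue"
      using Popm wm[of \<gamma>] by measurable
    have Qi: "integrable lebesgue (\<lambda>x. norm (Pop \<beta> m f x) powr q * wgt \<gamma> m x)"
    proof (rule Bochner_Integration.integrable_bound[OF integrable_mult_right[OF \<psi>i, of "K powr q"] Qm])
      show "AE x in lebesgue. norm (norm (Pop \<beta> m f x) powr q * wgt \<gamma> m x) \<le> norm (K powr q * \<psi> x)"
        using QB by (intro AE_I2) (simp add: wgt_def \<psi>_def)
    qed
    have inL: "Pop \<beta> m f \<in> Lpw \<gamma> m q" unfolding Lpw_def using Popm Qi by simp
    have "Lpw_norm \<gamma> m q (Pop \<beta> m f) \<le> (K powr q * \<Psi>) powr (1/q)"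
    proof -
      have "(\<integral>x. norm (Pop \<beta> m f x) powr q * wgt \<gamma> m x \<partial>lebesgue) \<le> (\<integral>x. K powr q * \<psi> x \<partial>lebesgue)"
        using QB Qi \<psi>i by (intro integral_mono) auto
      also have "\<dots> = K powr q * \<Psi>" unfolding \<Psi>_def by simp
      finally have le: "(\<integral>x. norm (Pop \<beta> m f x) powr q * wgt \<gamma> m x \<partial>lebesgue) \<le> K powr q * \<Psi>" .
      have nn: "0 \<le> (\<integral>x. norm (Pop \<beta> m f x) powr q * wgt \<gamma> m x \<partial>lebesgue)"
        by (intro integral_nonneg_AE) (auto simp: wgt_def)
      show ?thesis unfolding Lpw_norm_def using le nn q by (intro powr_mono2) auto
    qed
    also have "\<dots> = K * \<Psi> powr (1/q)"
      using K0 \<Psi>0 q by (simp add: powr_mult powr_powr)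
    also have "\<dots> = (E * \<Psi> powr (1/q)) * Lpw_norm \<alpha> m p f" unfolding K_def by simp
    finally show ?thesis using Pi inL by blast
  qed
  show ?thesis using main by blast
qed


end
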